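(* Let $m\ge1$ and let $f$ be a non-zero continuous function on $S^m$. Then for every $\delta>0$ there exist positive integers $n$ and $N$, points $y_1,\dots,y_N\in S^m$, and real numbers $c_1,\dots,c_N$ such that $$\max_{x\in S^m}\Big|f(x)-\sum_{k=1}^N c_kK_n(\langle x,y_k\rangle)\Big|<\delta,$$ where $K_n(t)=c_{m+1}(n)e^{nt}$ for $t\in[-1,1]$.
   Context: $S^m=\{x\in\mathbb{R}^{m+1}:\|x\|_2=1\}$ and $\langle\cdot,\cdot\rangle$ is the standard inner product on $\mathbb{R}^{m+1}$. For $\kappa>0$, $c_{m+1}(\kappa)=\dfrac{\kappa^{\frac{m+1}{2}-1}}{(2\pi)^{\frac{m+1}{2}} I_{\frac{m+1}{2}-1}(\kappa)}$, where $I_v$ is the modified Bessel function of the first kind of order $v$ (the normalizing constant of the von Mises–Fisher density on $S^m$ with respect to surface measure). *)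

theory Defs
  imports "HOL-Analysis.Analysis"
begin

definition besselI :: "real \<Rightarrow> real \<Rightarrow> real" where
  "besselI v x = (\<Sum>k. (x / 2) powr (2 * real k + v) / (fact k * Gamma (real k + v + 1)))"

definition vmf_const :: "nat \<Rightarrow> real \<Rightarrow> real" where
  "vmf_const d \<kappa> = \<kappa> powr (real d / 2 - 1) /
     ((2 * pi) powr (real d / 2) * besselI (real d / 2 - 1) \<kappa>)"

text \<open>K_n(t) = c_{m+1}(n) e^{n t}, where d = m+1 is the ambient dimension.\<close>
definition vmf_kernel :: "nat \<Rightarrow> nat \<Rightarrow> real \<Rightarrow> real" where
  "vmf_kernel d n t = vmf_const d (real n) * exp (real n * t)"

end

theory Submission
  imports Defs
begin

definition wt :: "real \<Rightarrow> real" where "wt s = max 0 (1/2 - \<bar>s - 3/2\<bar>)"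

lemma wt_nonneg: "0 \<le> wt s" by (simp add: wt_def)
lemma wt_le: "wt s \<le> 1/2" unfolding wt_def by (auto simp: max_def)
lemma wt_zero1: "s \<le> 1 \<Longrightarrow> wt s = 0" by (simp add: wt_def)
lemma wt_zero2: "s \<ge> 2 \<Longrightarrow> wt s = 0" by (simp add: wt_def)
lemma wt_lower: "wt s \<ge> 1/2 - \<bar>s - 3/2\<bar>" by (simp add: wt_def)
lemma continuous_wt: "continuous_on A wt"
  unfolding wt_def by (intro continuous_intros)

lemma cont_wt_pair:
  fixes G :: "'a::topological_space \<times> 'b::real_normed_vector \<Rightarrow> real"
  assumes "continuous_on (S \<times> (- ball 0 (1/2))) G" "closed S"
  shows "continuous_on (S \<times> UNIV) (\<lambda>p. wt (norm (snd p)) * G p)"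
proof -
  have c1: "continuous_on (S \<times> (- ball 0 (1/2))) (\<lambda>p. wt (norm (snd p)) * G p)"
    by (intro continuous_intros continuous_on_compose2[OF continuous_wt] assms) auto
  have c2: "continuous_on (S \<times> cball 0 1) (\<lambda>p. wt (norm (snd p)) * G p)"
  proof (rule continuous_on_eq[of _ "\<lambda>p. 0"])
    show "continuous_on (S \<times> cball 0 1) (\<lambda>p. 0::real)" by simp
  qed (auto simp: wt_zero1)
  have eqU: "S \<times> UNIV = S \<times> (- ball 0 (1/2)) \<union> S \<times> cball 0 1"
    by (auto simp: mem_cball mem_ball dist_norm)
  moreover have "closed (S \<times> (- ball (0::'b) (1/2)))"
    by (intro closed_Times assms(2) closed_Compl open_ball)
  moreover have "closed (S \<times> cball (0::'b) 1)"
    by (intro closed_Times assms(2) closed_cball)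
  ultimately show ?thesis
    using continuous_on_closed_Un[OF _ _ c1 c2] unfolding eqU by blast
qed

lemma rot_inv:
  fixes h :: "real^'n::{finite,wellorder} \<Rightarrow> real" and Q :: "real^'n::_ \<Rightarrow> real^'n::_"
  assumes "h integrable_on UNIV" "\<And>z. 0 \<le> h z" "orthogonal_transformation Q"
  shows "integral UNIV (\<lambda>z. h (Q z)) = integral UNIV h"
proof -
  let ?Qi = "inv Q"
  have oi: "orthogonal_transformation ?Qi" using orthogonal_transformation_inv[OF assms(3)] .
  have lq: "linear Q" and lqi: "linear ?Qi"
    using assms(3) oi orthogonal_transformation_linear by blast+
  have iq: "?Qi (Q x) = x" for x
    using orthogonal_transformation_inj[OF assms(3)] by (rule inv_f_f)
  have qi: "Q (?Qi x) = x" for x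
    using orthogonal_transformation_surj[OF assms(3)] by (rule surj_f_inv_f)
  have "((\<lambda>x. \<bar>det (matrix Q)\<bar> * h (Q x)) has_integral (integral UNIV h)) UNIV \<longleftrightarrow> (h has_integral (integral UNIV h)) UNIV"
  proof (rule cov_invertible_nonneg_eq[where g'="\<lambda>_. Q" and h'="\<lambda>_. ?Qi" and h="?Qi"])
    show "(Q has_derivative Q) (at x within UNIV)" for x using lq by (rule linear_imp_has_derivative)
    show "(?Qi has_derivative ?Qi) (at x within UNIV)" for x using lqi by (rule linear_imp_has_derivative)
    show "0 \<le> h y" for y by (rule assms(2))
    show "Q x \<in> UNIV \<and> ?Qi (Q x) = x" for x using iq by blast
    show "?Qi y \<in> UNIV \<and> Q (?Qi y) = y" for y using qi by blast
    show "?Qi \<circ> Q = id" for y using iq by (simp add: fun_eq_iff)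
  qed
  moreover have "\<bar>det (matrix Q)\<bar> = 1" using assms(3) by (rule orthogonal_transformation_det)
  ultimately have "((\<lambda>x. h (Q x)) has_integral (integral UNIV h)) UNIV"
    using integrable_integral[OF assms(1)] by simp
  then show ?thesis by (rule integral_unique)
qed

definition Ek :: "nat \<Rightarrow> real^'n \<Rightarrow> real^'n \<Rightarrow> real" where
  "Ek n x z = exp (real n * (x \<bullet> sgn z - 1))"

definition bB :: "real^'n" where "bB = (\<chi> i. 3)"

lemma Ek_pos: "0 < Ek n x z" by (simp add: Ek_def)

lemma cont_Psi:
  fixes f :: "real^'n \<Rightarrow> real"
  assumes "continuous_on (sphere 0 1) f"
  shows "continuous_on (sphere 0 1 \<times> UNIV) (\<lambda>p. wt (norm (snd p)) * (f (sgn (snd p)) * Ek n (fst p) (snd p)))"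
proof (rule cont_wt_pair)
  show "closed (sphere (0::real^'n) 1)" by simp
  have nz: "\<forall>p\<in>sphere 0 1 \<times> - ball 0 (1/2). snd p \<noteq> (0::real^'n)"
    by auto
  have s: "continuous_on (sphere 0 1 \<times> - ball 0 (1/2)) (\<lambda>p::(real^'n) \<times> (real^'n). sgn (snd p))"
    using nz by (intro continuous_intros) auto
  have "continuous_on (sphere 0 1 \<times> - ball 0 (1/2)) (\<lambda>p::(real^'n) \<times> (real^'n). f (sgn (snd p)))"
    by (rule continuous_on_compose2[OF assms s]) (auto simp: norm_sgn)
  then show "continuous_on (sphere 0 1 \<times> - ball 0 (1/2)) (\<lambda>p::(real^'n) \<times> (real^'n). f (sgn (snd p)) * Ek n (fst p) (snd p))"
    unfolding Ek_def by (intro continuous_intros s)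
qed

lemma cont_Psi_x:
  fixes f :: "real^'n \<Rightarrow> real"
  assumes "continuous_on (sphere 0 1) f" "x \<in> sphere 0 1"
  shows "continuous_on UNIV (\<lambda>z. wt (norm z) * (f (sgn z) * Ek n x z))"
proof -
  have "continuous_on UNIV (\<lambda>z. (\<lambda>p. wt (norm (snd p)) * (f (sgn (snd p)) * Ek n (fst p) (snd p))) (x, z))"
    by (rule continuous_on_compose2[OF cont_Psi[OF assms(1)]]) (use assms(2) in \<open>auto intro!: continuous_intros\<close>)
  then show ?thesis by simp
qed

lemma cball_sub_B: "norm (z::real^'n) < 3 \<Longrightarrow> z \<in> cbox (-bB) bB"
  unfolding bB_def mem_box_cart
  using component_le_norm_cart[of z] by (auto simp: abs_le_iff) (smt (verit) component_le_norm_cart)+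

lemma int_B:
  fixes \<phi> :: "real^'n \<Rightarrow> real"
  assumes "continuous_on UNIV \<phi>" "\<And>z. norm z \<ge> 2 \<Longrightarrow> \<phi> z = 0"
  shows "\<phi> integrable_on UNIV" "integral UNIV \<phi> = integral (cbox (-bB) bB) \<phi>"
proof -
  have ib: "\<phi> integrable_on cbox (-bB) bB"
    by (rule integrable_continuous) (rule continuous_on_subset[OF assms(1)], simp)
  have out: "\<phi> z = 0" if "z \<notin> cbox (-bB) bB" for z
  proof -
    have "\<not> norm z < 3" using that cball_sub_B by blast
    then show ?thesis using assms(2) by simp
  qed
  show "\<phi> integrable_on UNIV" by (rule integrable_on_superset[OF ib out]) auto
  have "integral UNIV \<phi> = integral UNIV (\<lambda>z. if z \<in> cbox (-bB) bB then \<phi> z else 0)"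
    by (rule integral_cong) (use out in auto)
  also have "\<dots> = integral (cbox (-bB) bB) \<phi>" by (rule integral_restrict_UNIV)
  finally show "integral UNIV \<phi> = integral (cbox (-bB) bB) \<phi>" .
qed

lemma Psi_zero: "norm z \<ge> 2 \<Longrightarrow> wt (norm z) * g = 0"
  by (simp add: wt_zero2)

lemma D_const:
  fixes x e :: "real^'n::{finite,wellorder}"
  assumes "x \<in> sphere 0 1" "e \<in> sphere 0 1"
  shows "integral UNIV (\<lambda>z. wt (norm z) * Ek n x z) = integral UNIV (\<lambda>z. wt (norm z) * Ek n e z)"
proof -
  obtain Q where Q: "orthogonal_transformation Q" "Q e = x"
    using orthogonal_transformation_exists[of e x] assms by auto
  let ?h = "\<lambda>z. wt (norm z) * Ek n x z"
  have c: "continuous_on UNIV ?h"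
    using cont_Psi_x[of "\<lambda>_. 1" x n] assms by simp
  have hi: "?h integrable_on UNIV"
    by (rule int_B(1)[OF c]) (simp add: wt_zero2)
  have "?h (Q z) = wt (norm z) * Ek n e z" for z
  proof -
    have "norm (Q z) = norm z" using Q(1) by (rule orthogonal_transformation_norm)
    moreover have "sgn (Q z) = Q (sgn z)"
      using Q(1) by (simp add: sgn_div_norm orthogonal_transformation_scaleR orthogonal_transformation_norm)
    moreover have "x \<bullet> Q (sgn z) = e \<bullet> sgn z"
      using Q unfolding orthogonal_transformation_def by metis
    ultimately show ?thesis by (simp add: Ek_def)
  qed
  then have "integral UNIV (\<lambda>z. ?h (Q z)) = integral UNIV (\<lambda>z. wt (norm z) * Ek n e z)" by simp
  moreover have "integral UNIV (\<lambda>z. ?h (Q z)) = integral UNIV ?h"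
    by (rule rot_inv[OF hi _ Q(1)]) (simp add: wt_nonneg Ek_pos less_imp_le)
  ultimately show ?thesis by simp
qed

lemma cont_wt_norm: "continuous_on UNIV (\<lambda>z::real^'n. wt (norm z))"
  by (rule continuous_on_compose2[OF continuous_wt continuous_on_norm_id]) auto

lemma int_wt: "(\<lambda>z::real^'n. wt (norm z)) integrable_on UNIV"
  by (rule int_B(1)[OF cont_wt_norm]) (simp add: wt_zero2)

lemma int_Psi:
  fixes f :: "real^'n \<Rightarrow> real"
  assumes "continuous_on (sphere 0 1) f" "x \<in> sphere 0 1"
  shows "(\<lambda>z. wt (norm z) * (f (sgn z) * Ek n x z)) integrable_on UNIV"
  by (rule int_B(1)[OF cont_Psi_x[OF assms]]) (simp add: wt_zero2)

lemma int_dI: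
  assumes "x \<in> sphere (0::real^'n) 1"
  shows "(\<lambda>z. wt (norm z) * Ek n x z) integrable_on UNIV"
  using int_Psi[of "\<lambda>_. 1" x n] assms by simp

lemma pointwise_conc:
  fixes f :: "real^'n \<Rightarrow> real"
  assumes M: "\<And>u. u \<in> sphere 0 1 \<Longrightarrow> \<bar>f u\<bar> \<le> M"
    and uc: "\<And>u v. u \<in> sphere 0 1 \<Longrightarrow> v \<in> sphere 0 1 \<Longrightarrow> dist u v < \<eta> \<Longrightarrow> \<bar>f u - f v\<bar> < \<epsilon>1"
    and x: "x \<in> sphere 0 1" and e1: "0 \<le> \<epsilon>1" and eta: "0 < \<eta>"
  shows "\<bar>wt (norm z) * ((f (sgn z) - f x) * Ek n x z)\<bar>
         \<le> \<epsilon>1 * (wt (norm z) * Ek n x z) + 2 * M * exp (- real n * \<eta>\<^sup>2 / 2) * wt (norm z)"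
proof (cases "wt (norm z) = 0")
  case True then show ?thesis by simp
next
  case False
  have "norm z > 1" using False wt_zero1[of "norm z"] not_less by blast
  then have z0: "z \<noteq> 0" by auto
  let ?s = "sgn z"
  have sS: "?s \<in> sphere 0 1" using z0 by (simp add: norm_sgn)
  have a0: "0 \<le> wt (norm z)" by (rule wt_nonneg)
  have E0: "0 < Ek n x z" by (rule Ek_pos)
  have M0: "0 \<le> M" using M[OF x] by linarith
  show ?thesis
  proof (cases "dist ?s x < \<eta>")
    case True
    then have "\<bar>f ?s - f x\<bar> \<le> \<epsilon>1" using uc[OF sS x] by fastforce
    then have "\<bar>(f ?s - f x) * Ek n x z\<bar> \<le> \<epsilon>1 * Ek n x z"
      using E0 by (simp add: abs_mult mult_right_mono)
    then have "\<bar>wt (norm z) * ((f ?s - f x) * Ek n x z)\<bar> \<le> wt (norm z) * (\<epsilon>1 * Ek n x z)"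
      using a0 by (simp add: abs_mult mult_left_mono)
    moreover have "0 \<le> 2 * M * exp (- real n * \<eta>\<^sup>2 / 2) * wt (norm z)"
      using M0 a0 by simp
    moreover have "wt (norm z) * (\<epsilon>1 * Ek n x z) = \<epsilon>1 * (wt (norm z) * Ek n x z)" by (rule mult.left_commute)
    ultimately show ?thesis by linarith
  next
    case False
    have ns: "norm ?s = 1" and nx: "norm x = 1" using sS x by auto
    have "(norm (?s - x))\<^sup>2 = (?s - x) \<bullet> (?s - x)" by (simp only: power2_norm_eq_inner)
    also have "\<dots> = ?s \<bullet> ?s - 2 * (x \<bullet> ?s) + x \<bullet> x"
      by (simp only: inner_diff_left inner_diff_right inner_commute[of x ?s])
    also have "?s \<bullet> ?s = 1" using ns by (metis norm_eq_sqrt_inner real_sqrt_eq_1_iff)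
    also have "x \<bullet> x = 1" using nx by (metis norm_eq_sqrt_inner real_sqrt_eq_1_iff)
    finally have d: "(norm (?s - x))\<^sup>2 = 2 - 2 * (x \<bullet> ?s)" by simp
    have "\<eta> \<le> norm (?s - x)" using False by (simp add: dist_norm)
    then have "\<eta>\<^sup>2 \<le> (norm (?s - x))\<^sup>2"
      using eta by (simp add: power_mono)
    then have xs: "x \<bullet> ?s - 1 \<le> - \<eta>\<^sup>2 / 2" using d by linarith
    have "real n * (x \<bullet> ?s - 1) \<le> real n * (- \<eta>\<^sup>2 / 2)"
      using xs by (rule mult_left_mono) simp
    then have Eb: "Ek n x z \<le> exp (- real n * \<eta>\<^sup>2 / 2)"
      unfolding Ek_def by simp
    have fb: "\<bar>f ?s - f x\<bar> \<le> 2 * M" using M[OF sS] M[OF x] by linarith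
    have "\<bar>wt (norm z) * ((f ?s - f x) * Ek n x z)\<bar> = wt (norm z) * (\<bar>f ?s - f x\<bar> * Ek n x z)"
      using a0 E0 by (simp add: abs_mult)
    also have "\<dots> \<le> wt (norm z) * (2 * M * exp (- real n * \<eta>\<^sup>2 / 2))"
      using fb Eb a0 E0 M0 by (intro mult_left_mono mult_mono) (simp_all add: less_imp_le)
    also have "\<dots> \<le> \<epsilon>1 * (wt (norm z) * Ek n x z) + 2 * M * exp (- real n * \<eta>\<^sup>2 / 2) * wt (norm z)"
      using e1 a0 E0 by (simp add: algebra_simps)
    finally show ?thesis .
  qed
qed

lemma icm: "(f::real^'n \<Rightarrow> real) integrable_on S \<Longrightarrow> (\<lambda>x. c * f x) integrable_on S"
  using integrable_on_cmult_left[of f S c] by simp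

lemma conc_int:
  fixes f :: "real^'n \<Rightarrow> real"
  assumes cf: "continuous_on (sphere 0 1) f"
    and M: "\<And>u. u \<in> sphere 0 1 \<Longrightarrow> \<bar>f u\<bar> \<le> M"
    and uc: "\<And>u v. u \<in> sphere 0 1 \<Longrightarrow> v \<in> sphere 0 1 \<Longrightarrow> dist u v < \<eta> \<Longrightarrow> \<bar>f u - f v\<bar> < \<epsilon>1"
    and x: "x \<in> sphere 0 1" and e1: "0 \<le> \<epsilon>1" and eta: "0 < \<eta>"
  shows "\<bar>integral UNIV (\<lambda>z. wt (norm z) * (f (sgn z) * Ek n x z)) - f x * integral UNIV (\<lambda>z. wt (norm z) * Ek n x z)\<bar>
         \<le> \<epsilon>1 * integral UNIV (\<lambda>z. wt (norm z) * Ek n x z) + 2 * M * exp (- real n * \<eta>\<^sup>2 / 2) * integral UNIV (\<lambda>z::real^'n. wt (norm z))"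
proof -
  let ?P = "\<lambda>z. wt (norm z) * (f (sgn z) * Ek n x z)"
  let ?D = "\<lambda>z. wt (norm z) * Ek n x z"
  let ?W = "\<lambda>z::real^'n. wt (norm z)"
  let ?C = "2 * M * exp (- real n * \<eta>\<^sup>2 / 2)"
  have i1: "?P integrable_on UNIV" by (rule int_Psi[OF cf x])
  have i2: "?D integrable_on UNIV" by (rule int_dI[OF x])
  have i3: "?W integrable_on UNIV" by (rule int_wt)
  have "integral UNIV (\<lambda>z. ?P z - f x * ?D z) = integral UNIV ?P - integral UNIV (\<lambda>z. f x * ?D z)"
    by (rule integral_diff[OF i1 icm[OF i2]])
  also have "integral UNIV (\<lambda>z. f x * ?D z) = f x * integral UNIV ?D" by simp
  finally have eq: "integral UNIV ?P - f x * integral UNIV ?D = integral UNIV (\<lambda>z. wt (norm z) * ((f (sgn z) - f x) * Ek n x z))"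
    by (simp add: algebra_simps)
  have ig: "(\<lambda>z. \<epsilon>1 * ?D z + ?C * ?W z) integrable_on UNIV"
    by (rule integrable_add[OF icm[OF i2] icm[OF i3]])
  have "norm (integral UNIV (\<lambda>z. wt (norm z) * ((f (sgn z) - f x) * Ek n x z))) \<le> integral UNIV (\<lambda>z. \<epsilon>1 * ?D z + ?C * ?W z)"
  proof (rule integral_norm_bound_integral[OF _ ig])
    show "(\<lambda>z. wt (norm z) * ((f (sgn z) - f x) * Ek n x z)) integrable_on UNIV"
      using integrable_diff[OF i1 icm[OF i2, of "f x"]] by (simp add: algebra_simps)
    show "norm (wt (norm z) * ((f (sgn z) - f x) * Ek n x z)) \<le> \<epsilon>1 * ?D z + ?C * ?W z" for z
      using pointwise_conc[OF M uc x e1 eta, where z=z and n=n] by (simp add: mult.commute mult.left_commute)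
  qed
  also have "integral UNIV (\<lambda>z. \<epsilon>1 * ?D z + ?C * ?W z) = \<epsilon>1 * integral UNIV ?D + ?C * integral UNIV ?W"
    using integral_add[OF icm[OF i2] icm[OF i3]] by simp
  finally show ?thesis unfolding eq real_norm_def by simp
qed

lemma lower_pt:
  fixes e z :: "real^'n"
  assumes e: "e \<in> sphere 0 1" and r: "0 < \<rho>" "\<rho> \<le> 1/8" and zc: "norm (z - (3/2) *\<^sub>R e) \<le> \<rho>"
  shows "exp (- 2 * real n * \<rho>) / 4 \<le> wt (norm z) * Ek n e z"
proof -
  let ?w = "z - (3/2) *\<^sub>R e"
  have ne: "norm e = 1" using e by simp
  have n15: "norm ((3/2) *\<^sub>R e) = 3/2" using ne by simp
  have "norm z \<le> norm ((3/2) *\<^sub>R e) + norm ?w"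
    by (metis add.commute diff_add_cancel norm_triangle_ineq)
  then have zu: "norm z \<le> 3/2 + \<rho>" using zc n15 by linarith
  have "norm ((3/2) *\<^sub>R e) \<le> norm z + norm ?w"
    by (metis diff_add_cancel norm_minus_commute norm_triangle_ineq4 add.commute diff_diff_eq2 norm_triangle_sub)
  then have zl: "3/2 - \<rho> \<le> norm z" using zc n15 by linarith
  have "\<bar>norm z - 3/2\<bar> \<le> \<rho>" using zu zl by linarith
  then have wt4: "1/4 \<le> wt (norm z)" using wt_lower[of "norm z"] r by linarith
  have ew: "\<bar>e \<bullet> ?w\<bar> \<le> \<rho>"
    using Cauchy_Schwarz_ineq2[of e ?w] ne zc by simp
  have "e \<bullet> z = e \<bullet> ((3/2) *\<^sub>R e) + e \<bullet> ?w" by (simp add: inner_diff_right)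
  also have "e \<bullet> ((3/2) *\<^sub>R e) = 3/2" using ne by (simp add: inner_scaleR_right dot_square_norm)
  finally have ez: "3/2 - \<rho> \<le> e \<bullet> z" using ew by linarith
  have nzp: "0 < norm z" using zl r by linarith
  have es: "e \<bullet> sgn z = (e \<bullet> z) / norm z"
    by (simp add: sgn_div_norm inner_scaleR_right divide_inverse mult.commute)
  have "(3/2 - \<rho>) / (3/2 + \<rho>) \<le> (e \<bullet> z) / norm z"
    using ez zu nzp r by (intro frac_le) auto
  moreover have "1 - 2 * \<rho> \<le> (3/2 - \<rho>) / (3/2 + \<rho>)"
    using r by (simp add: field_simps)
  ultimately have "1 - 2 * \<rho> \<le> e \<bullet> sgn z" using es by linarith
  then have "real n * (- 2 * \<rho>) \<le> real n * (e \<bullet> sgn z - 1)"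
    by (intro mult_left_mono) auto
  then have "exp (- 2 * real n * \<rho>) \<le> Ek n e z"
    unfolding Ek_def by simp
  then have "(1/4) * exp (- 2 * real n * \<rho>) \<le> wt (norm z) * Ek n e z"
    using wt4 by (intro mult_mono) (auto intro: wt_nonneg)
  then show ?thesis by simp
qed

lemma lower_D:
  fixes e :: "real^'n"
  assumes e: "e \<in> sphere 0 1" and r: "0 < \<rho>" "\<rho> \<le> 1/8"
  shows "\<exists>c0>0. \<forall>n. c0 * exp (- 2 * real n * \<rho>) \<le> integral UNIV (\<lambda>z. wt (norm z) * Ek n e z)"
proof -
  define r where "r = \<rho> / real CARD('n)"
  have rp: "0 < r" using r by (simp add: r_def)
  define v :: "real^'n" where "v = (\<chi> i. r)"
  define C where "C = cbox ((3/2) *\<^sub>R e - v) ((3/2) *\<^sub>R e + v)"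
  have Cne: "C \<noteq> {}"
  proof -
    have "(3/2) *\<^sub>R e \<in> C" using rp by (simp add: C_def mem_box_cart v_def)
    then show ?thesis by auto
  qed
  have cC: "measure lborel C = (\<Prod>i\<in>(UNIV::'n set). 2 * r)"
    unfolding C_def using Cne[unfolded C_def] by (simp add: content_cbox_cart v_def)
  have cpos: "0 < measure lborel C" unfolding cC using rp by (simp add: prod_pos)
  have inC: "norm (z - (3/2) *\<^sub>R e) \<le> \<rho>" if "z \<in> C" for z
  proof -
    have "\<bar>(z - (3/2) *\<^sub>R e) $ i\<bar> \<le> r" for i
      using that unfolding C_def mem_box_cart v_def by (simp add: abs_le_iff) (smt (verit))
    then have "(\<Sum>i\<in>UNIV. \<bar>(z - (3/2) *\<^sub>R e) $ i\<bar>) \<le> (\<Sum>i\<in>(UNIV::'n set). r)"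
      by (intro sum_mono) auto
    also have "\<dots> = \<rho>" by (simp add: r_def)
    finally show ?thesis using norm_le_l1_cart[of "z - (3/2) *\<^sub>R e"] by linarith
  qed
  show ?thesis
  proof (intro exI[of _ "measure lborel C / 4"] conjI allI)
    show "0 < measure lborel C / 4" using cpos by simp
    fix n
    let ?D = "\<lambda>z. wt (norm z) * Ek n e z"
    have iU: "?D integrable_on UNIV" by (rule int_dI[OF e])
    have iC: "?D integrable_on C" unfolding C_def by (rule integrable_on_subcbox[OF iU]) simp
    have "integral C (\<lambda>z. exp (- 2 * real n * \<rho>) / 4) \<le> integral C ?D"
      by (rule integral_le) (use iC lower_pt[OF e r inC] in \<open>auto simp: C_def\<close>)
    also have "\<dots> \<le> integral UNIV ?D"
      by (rule integral_subset_le[OF _ iC iU]) (auto intro!: mult_nonneg_nonneg wt_nonneg less_imp_le[OF Ek_pos])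
    finally show "measure lborel C / 4 * exp (- 2 * real n * \<rho>) \<le> integral UNIV ?D"
      by (simp add: C_def)
  qed
qed

lemma cell_bound:
  fixes g :: "real^'n \<Rightarrow> real"
  assumes gi: "g integrable_on cbox u v" and b: "\<And>z. z \<in> cbox u v \<Longrightarrow> \<bar>g z - g t\<bar> \<le> \<epsilon>" and e: "0 \<le> \<epsilon>"
  shows "\<bar>integral (cbox u v) g - g t * measure lborel (cbox u v)\<bar> \<le> \<epsilon> * measure lborel (cbox u v)"
proof -
  have i2: "(\<lambda>z. g z - g t) integrable_on cbox u v" by (rule integrable_diff[OF gi integrable_const])
  have "integral (cbox u v) (\<lambda>z. g z - g t) = integral (cbox u v) g - g t * measure lborel (cbox u v)"
    using integral_diff[OF gi integrable_const, of "g t"] by simp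
  moreover have "norm (integral (cbox u v) (\<lambda>z. g z - g t)) \<le> \<epsilon> * measure lborel (cbox u v)"
    by (rule has_integral_bound[OF e integrable_integral[OF i2]]) (use b in simp)
  ultimately show ?thesis by simp
qed

lemma riemann:
  fixes f :: "real^'n \<Rightarrow> real"
  assumes cf: "continuous_on (sphere 0 1) f" and e2: "0 < \<epsilon>2"
  shows "\<exists>p. p tagged_division_of (cbox (-bB) bB) \<and>
    (\<forall>x\<in>sphere 0 1. \<bar>integral (cbox (-bB) bB) (\<lambda>z. wt (norm z) * (f (sgn z) * Ek n x z))
        - (\<Sum>(t,K)\<in>p. wt (norm t) * (f (sgn t) * Ek n x t) * measure lborel K)\<bar> \<le> \<epsilon>2 * measure lborel (cbox (-bB) (bB::real^'n)))"
proof -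
  let ?B = "cbox (-bB) (bB::real^'n)"
  let ?S = "sphere (0::real^'n) 1"
  let ?P = "\<lambda>p::(real^'n)\<times>(real^'n). wt (norm (snd p)) * (f (sgn (snd p)) * Ek n (fst p) (snd p))"
  have "continuous_on (?S \<times> ?B) ?P"
    by (rule continuous_on_subset[OF cont_Psi[OF cf]]) auto
  then have "uniformly_continuous_on (?S \<times> ?B) ?P"
    by (intro compact_uniformly_continuous compact_Times) auto
  then obtain \<delta> where d: "\<delta> > 0" and dd: "\<And>a b. a \<in> ?S \<times> ?B \<Longrightarrow> b \<in> ?S \<times> ?B \<Longrightarrow> dist b a < \<delta> \<Longrightarrow> dist (?P b) (?P a) < \<epsilon>2"
    unfolding uniformly_continuous_on_def using e2 by metis
  obtain p where p: "p tagged_division_of ?B" and fp: "(\<lambda>t. ball t \<delta>) fine p"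
    using fine_division_exists[OF gauge_ball[OF d]] by metis
  have fin: "finite p" using p by blast
  have "\<bar>integral ?B (\<lambda>z. wt (norm z) * (f (sgn z) * Ek n x z))
        - (\<Sum>(t,K)\<in>p. wt (norm t) * (f (sgn t) * Ek n x t) * measure lborel K)\<bar> \<le> \<epsilon>2 * measure lborel ?B"
    if x: "x \<in> ?S" for x
  proof -
    let ?g = "\<lambda>z. wt (norm z) * (f (sgn z) * Ek n x z)"
    have gB: "?g integrable_on ?B"
      by (rule integrable_continuous) (rule continuous_on_subset[OF cont_Psi_x[OF cf x]], simp)
    have "integral ?B ?g = (\<Sum>(t,K)\<in>p. integral K ?g)"
      by (rule integral_combine_tagged_division_topdown[OF gB p])
    then have "integral ?B ?g - (\<Sum>(t,K)\<in>p. ?g t * measure lborel K)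
             = (\<Sum>(t,K)\<in>p. integral K ?g - ?g t * measure lborel K)"
      by (simp add: sum_subtractf case_prod_unfold)
    also have "\<bar>\<dots>\<bar> \<le> (\<Sum>(t,K)\<in>p. \<bar>integral K ?g - ?g t * measure lborel K\<bar>)"
      by (simp add: case_prod_unfold sum_abs)
    also have "\<dots> \<le> (\<Sum>(t,K)\<in>p. \<epsilon>2 * measure lborel K)"
    proof (rule sum_mono)
      fix tK assume tK: "tK \<in> p"
      obtain t K where tKe: "tK = (t, K)" by (cases tK)
      have tK': "(t, K) \<in> p" using tK tKe by simp
      obtain u v where K: "K = cbox u v" using p tK' by blast
      have KB: "K \<subseteq> ?B" and tinK: "t \<in> K" using p tK' by blast+
      have Kb: "K \<subseteq> ball t \<delta>" using fp tK' unfolding fine_def by blast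
      have "\<bar>integral (cbox u v) ?g - ?g t * measure lborel (cbox u v)\<bar> \<le> \<epsilon>2 * measure lborel (cbox u v)"
      proof (rule cell_bound)
        show "?g integrable_on cbox u v" using integrable_on_subcbox[OF gB] KB K by simp
        show "0 \<le> \<epsilon>2" using e2 by simp
        fix z assume z: "z \<in> cbox u v"
        have "dist (?P (x, z)) (?P (x, t)) < \<epsilon>2"
        proof (rule dd)
          show "(x, t) \<in> ?S \<times> ?B" using x tinK KB by auto
          show "(x, z) \<in> ?S \<times> ?B" using x z KB K by auto
          show "dist (x, z) (x, t) < \<delta>" using z K Kb by (auto simp: dist_Pair_Pair dist_commute)
        qed
        then show "\<bar>?g z - ?g t\<bar> \<le> \<epsilon>2" by (simp add: dist_real_def)
      qed
      then show "(case tK of (t, K) \<Rightarrow> \<bar>integral K ?g - ?g t * measure lborel K\<bar>) \<le> (case tK of (t, K) \<Rightarrow> \<epsilon>2 * measure lborel K)"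
        using tKe K by simp
    qed
    also have "\<dots> = \<epsilon>2 * (\<Sum>(t,K)\<in>p. measure lborel K)"
      by (simp add: sum_distrib_left case_prod_unfold)
    also have "(\<Sum>(t,K)\<in>p. measure lborel K) = measure lborel ?B"
      using additive_content_tagged_division[OF p] by simp
    finally show ?thesis by simp
  qed
  then show ?thesis using p by blast
qed

lemma choose_n:
  fixes K \<epsilon>1 a :: real
  assumes "0 \<le> K" "0 < \<epsilon>1" "0 < a"
  obtains n :: nat where "n > 0" "K * exp (- real n * a) \<le> \<epsilon>1"
proof -
  define n where "n = nat \<lceil>K / (a * \<epsilon>1)\<rceil> + 1"
  have n0: "n > 0" by (simp add: n_def)
  have nb: "K / (a * \<epsilon>1) < real n" unfolding n_def by linarith
  have t0: "0 < real n * a" using n0 assms by simp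
  have "exp (real n * a) \<ge> 1 + real n * a" by (rule exp_ge_add_one_self)
  then have et: "exp (real n * a) > real n * a" by linarith
  have "K * exp (- real n * a) = K / exp (real n * a)" by (simp add: exp_minus divide_inverse)
  also have "\<dots> \<le> K / (real n * a)"
    using assms(1) t0 et by (intro divide_left_mono) auto
  also have "\<dots> \<le> \<epsilon>1"
  proof -
    have "K < real n * a * \<epsilon>1" using nb assms by (simp add: field_simps)
    then show ?thesis using t0 by (simp add: field_simps)
  qed
  finally show ?thesis using that n0 by blast
qed

lemma core:
  fixes f :: "real^'n::{finite,wellorder} \<Rightarrow> real"
  assumes cf: "continuous_on (sphere 0 1) f" and ep: "0 < \<epsilon>"
  shows "\<exists>n::nat. n > 0 \<and> (\<exists>p::((real^'n::_) \<times> (real^'n::_) set) set. finite p \<and> p \<noteq> {} \<and>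
     (\<exists>y c. (\<forall>k\<in>p. y k \<in> sphere 0 1) \<and>
        (\<forall>x\<in>sphere 0 1. \<bar>f x - (\<Sum>k\<in>p. c k * exp (real n * (x \<bullet> y k)))\<bar> \<le> \<epsilon>)))"
proof -
  let ?S = "sphere (0::real^('n::_)) 1"
  let ?B = "cbox (-bB) (bB::real^('n::_))"
  define e :: "real^('n::_)" where "e = axis undefined 1"
  have e: "e \<in> ?S" by (simp add: e_def)
  have "bounded (f ` ?S)" by (intro compact_imp_bounded compact_continuous_image cf) simp
  then obtain M where "\<forall>v\<in>f ` ?S. norm v \<le> M" unfolding bounded_iff by blast
  then have M: "\<And>u. u \<in> ?S \<Longrightarrow> \<bar>f u\<bar> \<le> M" by simp
  have M0: "0 \<le> M" using M[OF e] by linarith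
  define \<epsilon>1 where "\<epsilon>1 = \<epsilon> / 4"
  have e1: "0 < \<epsilon>1" using ep by (simp add: \<epsilon>1_def)
  have "uniformly_continuous_on ?S f" by (intro compact_uniformly_continuous cf) simp
  then obtain \<eta>0 where h0: "\<eta>0 > 0" and hu: "\<And>u v. u \<in> ?S \<Longrightarrow> v \<in> ?S \<Longrightarrow> dist v u < \<eta>0 \<Longrightarrow> dist (f v) (f u) < \<epsilon>1"
    unfolding uniformly_continuous_on_def using e1 by metis
  define \<eta> where "\<eta> = min \<eta>0 1"
  have eta: "0 < \<eta>" "\<eta> \<le> 1" using h0 by (auto simp: \<eta>_def)
  have uc: "\<bar>f u - f v\<bar> < \<epsilon>1" if "u \<in> ?S" "v \<in> ?S" "dist u v < \<eta>" for u v
    using hu[OF that(2,1)] that(3) by (auto simp: \<eta>_def dist_real_def)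
  define \<rho> where "\<rho> = \<eta>\<^sup>2 / 8"
  have rho: "0 < \<rho>" "\<rho> \<le> 1/8" using eta by (auto simp: \<rho>_def power_le_one)
  obtain c0 where c0: "c0 > 0" and c0b: "\<And>n. c0 * exp (- 2 * real n * \<rho>) \<le> integral UNIV (\<lambda>z. wt (norm z) * Ek n e z)"
    using lower_D[OF e rho] by blast
  define W where "W = integral UNIV (\<lambda>z::real^('n::_). wt (norm z))"
  have W0: "0 \<le> W" unfolding W_def by (rule integral_nonneg[OF int_wt]) (simp add: wt_nonneg)
  define K where "K = 2 * M * W / c0"
  have K0: "0 \<le> K" using M0 W0 c0 by (simp add: K_def)
  obtain n :: nat where n0: "n > 0" and nK: "K * exp (- real n * (\<eta>\<^sup>2 / 4)) \<le> \<epsilon>1"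
    using choose_n[OF K0 e1, of "\<eta>\<^sup>2 / 4"] eta by auto
  define D0 where "D0 = integral UNIV (\<lambda>z. wt (norm z) * Ek n e z)"
  have D0pos: "0 < D0" using c0b[of n] c0 unfolding D0_def by (smt (verit) exp_gt_zero mult_pos_pos)
  have tail: "2 * M * exp (- real n * \<eta>\<^sup>2 / 2) * W \<le> \<epsilon>1 * D0"
  proof -
    have "exp (- real n * \<eta>\<^sup>2 / 2) = exp (- 2 * real n * \<rho>) * exp (- real n * (\<eta>\<^sup>2 / 4))"
      by (simp add: \<rho>_def flip: exp_add)
    then have "2 * M * exp (- real n * \<eta>\<^sup>2 / 2) * W = (K * exp (- real n * (\<eta>\<^sup>2 / 4))) * (c0 * exp (- 2 * real n * \<rho>))"
      using c0 by (simp add: K_def field_simps)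
    also have "\<dots> \<le> \<epsilon>1 * D0"
      using nK c0b[of n] K0 c0 e1 unfolding D0_def
      by (intro mult_mono) auto
    finally show ?thesis .
  qed
  have cB: "0 < measure lborel ?B"
    by (rule content_pos_lt) (auto simp: bB_def Basis_vec_def inner_axis)
  define \<epsilon>2 where "\<epsilon>2 = \<epsilon>1 * D0 / measure lborel ?B"
  have e2: "0 < \<epsilon>2" using e1 D0pos cB by (simp add: \<epsilon>2_def)
  obtain p where p: "p tagged_division_of ?B" and pb: "\<And>x. x \<in> ?S \<Longrightarrow>
      \<bar>integral ?B (\<lambda>z. wt (norm z) * (f (sgn z) * Ek n x z))
        - (\<Sum>(t,K)\<in>p. wt (norm t) * (f (sgn t) * Ek n x t) * measure lborel K)\<bar> \<le> \<epsilon>2 * measure lborel ?B"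
    using riemann[OF cf e2, of n] by blast
  have fin: "finite p" using p by blast
  have pne: "p \<noteq> {}"
  proof
    assume "p = {}"
    then have "measure lborel ?B = 0" using additive_content_tagged_division[OF p] by simp
    then show False using cB by simp
  qed
  define y where "y = (\<lambda>k::(real^('n::_)) \<times> (real^('n::_)) set. if fst k = 0 then e else sgn (fst k))"
  define c where "c = (\<lambda>k::(real^('n::_)) \<times> (real^('n::_)) set. wt (norm (fst k)) * f (sgn (fst k)) * exp (- real n) * measure lborel (snd k) / D0)"
  have yS: "\<forall>k\<in>p. y k \<in> ?S" using e by (auto simp: y_def norm_sgn)
  have approx: "\<bar>f x - (\<Sum>k\<in>p. c k * exp (real n * (x \<bullet> y k)))\<bar> \<le> \<epsilon>" if x: "x \<in> ?S" for x
  proof -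
    let ?g = "\<lambda>z. wt (norm z) * (f (sgn z) * Ek n x z)"
    let ?R = "\<Sum>(t,K)\<in>p. wt (norm t) * (f (sgn t) * Ek n x t) * measure lborel K"
    have termeq: "c k * exp (real n * (x \<bullet> y k)) = (case k of (t,K) \<Rightarrow> wt (norm t) * (f (sgn t) * Ek n x t) * measure lborel K) / D0" for k
    proof (cases k)
      case (Pair t K)
      show ?thesis
      proof (cases "t = 0")
        case True then show ?thesis by (simp add: Pair c_def wt_zero1)
      next
        case False
        have "Ek n x t = exp (real n * (x \<bullet> sgn t)) * exp (- real n)"
          unfolding Ek_def by (simp add: right_diff_distrib flip: exp_add)
        then show ?thesis using False by (simp add: Pair c_def y_def)
      qed
    qed
    have sumeq: "(\<Sum>k\<in>p. c k * exp (real n * (x \<bullet> y k))) = ?R / D0"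
      by (simp add: termeq sum_divide_distrib)
    have TB: "integral UNIV ?g = integral ?B ?g"
      by (rule int_B(2)[OF cont_Psi_x[OF cf x]]) (simp add: wt_zero2)
    have Dx: "integral UNIV (\<lambda>z. wt (norm z) * Ek n x z) = D0"
      unfolding D0_def by (rule D_const[OF x e])
    have c1: "\<bar>integral UNIV ?g - f x * D0\<bar> \<le> \<epsilon>1 * D0 + 2 * M * exp (- real n * \<eta>\<^sup>2 / 2) * W"
      using conc_int[OF cf M uc x less_imp_le[OF e1] eta(1), of n] Dx unfolding W_def by simp
    have c2: "\<bar>integral UNIV ?g - ?R\<bar> \<le> \<epsilon>1 * D0"
      using pb[OF x] TB cB by (simp add: \<epsilon>2_def)
    have "\<bar>f x * D0 - ?R\<bar> \<le> 3 * \<epsilon>1 * D0" using c1 c2 tail by linarith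
    note b3 = this
    have eqd: "f x - ?R / D0 = (f x * D0 - ?R) / D0" using D0pos by (simp add: field_simps)
    have "\<bar>f x - ?R / D0\<bar> = \<bar>f x * D0 - ?R\<bar> / D0" using D0pos by (simp only: eqd abs_divide)
    also have "\<dots> \<le> 3 * \<epsilon>1 * D0 / D0" using b3 D0pos by (intro divide_right_mono) auto
    also have "\<dots> = 3 * \<epsilon>1" using D0pos by simp
    finally have "\<bar>f x - ?R / D0\<bar> \<le> 3 * \<epsilon>1" .
    then show ?thesis using sumeq e1 by (simp add: \<epsilon>1_def)
  qed
  show ?thesis using n0 fin pne yS approx by blast
qed

lemma besselI_pos:
  assumes v: "0 \<le> v" and x: "0 < x"
  shows "0 < besselI v x"
proof -
  define a where "a k = (x/2) powr (2 * real k + v) / (fact k * Gamma (real k + v + 1))" for k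
  have gp: "0 < Gamma (real k + v + 1)" for k using v by (intro Gamma_real_pos) simp
  have apos: "0 < a k" for k unfolding a_def using x gp[of k] by (simp add: fact_gt_zero)
  have rec: "a (Suc k) = a k * ((x/2)^2 / ((real k + 1) * (real k + v + 1)))" for k
  proof -
    have p: "(x/2) powr (2 * real (Suc k) + v) = (x/2) powr (2 * real k + v) * (x/2)^2"
    proof -
      have "2 * real (Suc k) + v = (2 * real k + v) + real 2" by simp
      then have "(x/2) powr (2 * real (Suc k) + v) = (x/2) powr (2 * real k + v) * (x/2) powr (real 2)"
        by (simp only: powr_add)
      also have "(x/2) powr (real 2) = (x/2)^2" using x by (simp only: powr_realpow)
      finally show ?thesis .
    qed
    have fk: "fact (Suc k) = (real k + 1) * (fact k :: real)" by (simp add: algebra_simps)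
    have g: "Gamma (real (Suc k) + v + 1) = (real k + v + 1) * Gamma (real k + v + 1)"
    proof -
      have "real (Suc k) + v + 1 = (real k + v + 1) + 1" by simp
      moreover have "real k + v + 1 \<notin> \<int>\<^sub>\<le>\<^sub>0" using v nonpos_Ints_nonpos by fastforce
      ultimately show ?thesis using Gamma_plus1 by metis
    qed
    show ?thesis unfolding a_def p fk g using gp[of k] v
      by (simp add: field_simps)
  qed
  have sa: "summable a"
  proof (rule summable_ratio_test[where c="1/2" and N="nat \<lceil>2 * (x/2)^2\<rceil>"])
    fix k assume k: "nat \<lceil>2 * (x/2)^2\<rceil> \<le> k"
    then have kb: "2 * (x/2)^2 \<le> real k" by linarith
    have "(x/2)^2 / ((real k + 1) * (real k + v + 1)) \<le> 1/2"
    proof -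
      have "2 * (x/2)^2 \<le> (real k + 1) * (real k + v + 1)"
      proof -
        have "real k + 1 \<le> (real k + 1) * (real k + v + 1)" using v by (simp add: algebra_simps)
        then show ?thesis using kb by linarith
      qed
      moreover have "0 < (real k + 1) * (real k + v + 1)" using v by (intro mult_pos_pos) auto
      ultimately show ?thesis by (subst pos_divide_le_eq) auto
    qed
    then have "a k * ((x/2)^2 / ((real k + 1) * (real k + v + 1))) \<le> a k * (1/2)"
      using apos[of k] by (intro mult_left_mono) auto
    note h = this
    have "norm (a (Suc k)) = a (Suc k)" using apos[of "Suc k"] by simp
    also have "\<dots> = a k * ((x/2)^2 / ((real k + 1) * (real k + v + 1)))" by (rule rec)
    also have "\<dots> \<le> a k * (1/2)" by (rule h)
    also have "\<dots> = 1/2 * norm (a k)" using apos[of k] by simp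
    finally show "norm (a (Suc k)) \<le> 1/2 * norm (a k)" .
  qed simp
  have "0 < suminf a" by (rule suminf_pos[OF sa apos])
  then show ?thesis unfolding besselI_def a_def by simp
qed

lemma vmf_const_pos:
  assumes "2 \<le> d" "0 < \<kappa>"
  shows "0 < vmf_const d \<kappa>"
proof -
  have "0 < besselI (real d / 2 - 1) \<kappa>" using assms by (intro besselI_pos) auto
  then show ?thesis unfolding vmf_const_def using assms by simp
qed

typedef ('a::finite) wo = "{..<CARD('a)}"
  morphisms rep_wo abs_wo
  by (intro exI[of _ 0]) (simp add: card_gt_0_iff)

instance wo :: (finite) finite
proof
  have "(UNIV :: 'a wo set) = abs_wo ` {..<CARD('a)}"
    using type_definition.univ[OF type_definition_wo] .
  then show "finite (UNIV :: 'a wo set)" by (metis finite_imageI finite_lessThan)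
qed

instantiation wo :: (finite) linorder
begin
definition less_eq_wo :: "'a wo \<Rightarrow> 'a wo \<Rightarrow> bool" where "less_eq_wo a b \<longleftrightarrow> rep_wo a \<le> rep_wo b"
definition less_wo :: "'a wo \<Rightarrow> 'a wo \<Rightarrow> bool" where "less_wo a b \<longleftrightarrow> rep_wo a < rep_wo b"
instance
  by standard (auto simp: less_eq_wo_def less_wo_def rep_wo_inject)
end

instance wo :: (finite) wellorder
proof
  fix P :: "'a wo \<Rightarrow> bool" and a :: "'a wo"
  assume step: "\<And>x. (\<And>y. y < x \<Longrightarrow> P y) \<Longrightarrow> P x"
  have "\<And>x. rep_wo x = k \<Longrightarrow> P x" for k
  proof (induction k rule: less_induct)
    case (less k)
    show ?case by (rule step) (use less in \<open>auto simp: less_wo_def\<close>)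
  qed
  then show "P a" by blast
qed

lemma card_wo: "CARD('a::finite wo) = CARD('a)"
  using type_definition.card[OF type_definition_wo] by simp

theorem lemma4:
  fixes f :: "real ^ 'd \<Rightarrow> real"
  assumes "CARD('d) \<ge> 2"
    and "continuous_on (sphere 0 1) f"
    and "\<exists>x\<in>sphere 0 1. f x \<noteq> 0"
    and "\<delta> > 0"
  shows "\<exists>n N :: nat. n > 0 \<and> N > 0 \<and>
           (\<exists>y :: nat \<Rightarrow> real ^ 'd. \<exists>c :: nat \<Rightarrow> real.
              (\<forall>k\<in>{1..N}. y k \<in> sphere 0 1) \<and>
              (SUP x\<in>sphere 0 1. \<bar>f x - (\<Sum>k=1..N. c k * vmf_kernel CARD('d) n (x \<bullet> y k))\<bar>) < \<delta>)"
proof -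
  obtain \<sigma> :: "'d \<Rightarrow> 'd wo" where bs: "bij \<sigma>"
    using finite_same_card_bij[of "UNIV::'d set" "UNIV::'d wo set"] card_wo[where 'a='d] by auto
  define P :: "real^'d \<Rightarrow> real^('d wo)" where "P x = (\<chi> j. x $ inv \<sigma> j)" for x
  define Q :: "real^('d wo) \<Rightarrow> real^'d" where "Q y = (\<chi> i. y $ \<sigma> i)" for y
  have iv1: "inv \<sigma> (\<sigma> i) = i" for i using bs by (simp add: bij_is_inj)
  have iv2: "\<sigma> (inv \<sigma> j) = j" for j using bs by (simp add: bij_is_surj surj_f_inv_f)
  have QP: "Q (P x) = x" for x by (simp add: P_def Q_def vec_eq_iff iv1)
  have PQ: "P (Q y) = y" for y by (simp add: P_def Q_def vec_eq_iff iv2)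
  have inn: "P x \<bullet> y = x \<bullet> Q y" for x y
  proof -
    have "x \<bullet> Q y = (\<Sum>i\<in>UNIV. x $ i * y $ \<sigma> i)" by (simp add: inner_vec_def Q_def)
    also have "\<dots> = (\<Sum>i\<in>UNIV. (\<lambda>j. x $ inv \<sigma> j * y $ j) (\<sigma> i))" by (simp add: iv1)
    also have "\<dots> = (\<Sum>j\<in>UNIV. x $ inv \<sigma> j * y $ j)"
      by (rule sum.reindex_bij_betw) (use bs in \<open>simp add: bij_betw_def\<close>)
    also have "\<dots> = P x \<bullet> y" by (simp add: inner_vec_def P_def)
    finally show ?thesis by simp
  qed
  have nQ: "norm (Q y) = norm y" for y
  proof -
    have "Q y \<bullet> Q y = y \<bullet> y" using inn[of "Q y" y] PQ by simp
    then show ?thesis by (simp add: norm_eq_sqrt_inner)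
  qed
  have nP: "norm (P x) = norm x" for x
  proof -
    have "P x \<bullet> P x = x \<bullet> x" using inn[of x "P x"] QP by simp
    then show ?thesis by (simp add: norm_eq_sqrt_inner)
  qed
  have linQ: "linear Q" by (rule linearI) (simp_all add: Q_def vec_eq_iff)
  have cQ: "continuous_on UNIV Q"
    using linQ by (simp add: linear_continuous_on linear_conv_bounded_linear)
  define f' where "f' y = f (Q y)" for y
  have cf': "continuous_on (sphere 0 1) f'"
    unfolding f'_def by (rule continuous_on_compose2[OF assms(2) continuous_on_subset[OF cQ]]) (auto simp: nQ)
  have d2: "\<delta> / 2 > 0" using assms(4) by simp
  obtain n :: nat and p :: "((real^('d wo)) \<times> (real^('d wo)) set) set" and y' c' where
    n0: "n > 0" and fp: "finite p" and pne: "p \<noteq> {}" and yS: "\<forall>k\<in>p. y' k \<in> sphere 0 1"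
    and ap: "\<forall>x\<in>sphere 0 1. \<bar>f' x - (\<Sum>k\<in>p. c' k * exp (real n * (x \<bullet> y' k)))\<bar> \<le> \<delta> / 2"
    using core[OF cf' d2] by blast
  obtain g where g: "bij_betw g {1..card p} p" using ex_bij_betw_nat_finite_1[OF fp] by blast
  define V where "V = vmf_const CARD('d) (real n)"
  have V0: "0 < V" unfolding V_def using assms(1) n0 by (intro vmf_const_pos) auto
  define y where "y k = Q (y' (g k))" for k
  define c where "c k = c' (g k) / V" for k
  have Np: "card p > 0" using fp pne by (simp add: card_gt_0_iff)
  have yS2: "\<forall>k\<in>{1..card p}. y k \<in> sphere 0 1"
    using yS g by (auto simp: y_def nQ bij_betw_def)
  have bnd: "\<bar>f x - (\<Sum>k=1..card p. c k * vmf_kernel CARD('d) n (x \<bullet> y k))\<bar> \<le> \<delta> / 2"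
    if x: "x \<in> sphere 0 1" for x
  proof -
    have "(\<Sum>k=1..card p. c k * vmf_kernel CARD('d) n (x \<bullet> y k))
        = (\<Sum>k=1..card p. (\<lambda>q. c' q * exp (real n * (P x \<bullet> y' q))) (g k))"
      using V0 by (intro sum.cong) (simp_all add: c_def y_def vmf_kernel_def V_def[symmetric] inn)
    also have "\<dots> = (\<Sum>q\<in>p. c' q * exp (real n * (P x \<bullet> y' q)))"
      by (rule sum.reindex_bij_betw[OF g])
    finally have "(\<Sum>k=1..card p. c k * vmf_kernel CARD('d) n (x \<bullet> y k)) = (\<Sum>q\<in>p. c' q * exp (real n * (P x \<bullet> y' q)))" .
    moreover have "f x = f' (P x)" by (simp add: f'_def QP)
    moreover have "P x \<in> sphere 0 1" using x by (simp add: nP)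
    ultimately show ?thesis using ap by simp
  qed
  have ne: "sphere (0::real^'d) 1 \<noteq> {}"
  proof -
    have "axis undefined (1::real) \<in> sphere (0::real^'d) 1" by simp
    then show ?thesis by blast
  qed
  have "(SUP x\<in>sphere 0 1. \<bar>f x - (\<Sum>k=1..card p. c k * vmf_kernel CARD('d) n (x \<bullet> y k))\<bar>) \<le> \<delta> / 2"
    by (rule cSUP_least[OF ne bnd])
  then have "(SUP x\<in>sphere 0 1. \<bar>f x - (\<Sum>k=1..card p. c k * vmf_kernel CARD('d) n (x \<bullet> y k))\<bar>) < \<delta>"
    using assms(4) by linarith
  then show ?thesis using n0 Np yS2 by blast
qed

end
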